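(* Assume $X_0\in L^\infty$ and $x\in\mathbb{R}$. If $Q_0(1)\mathrm{E}[\rho]\le x$, then $v^\circ(x)=0$ and the variance-minimal quantile functions in $\mathscr{Q}_{\mathrm{icx}}(x,Q_0)$ are exactly the constant functions with value in the interval $[Q_0(1),x/\mathrm{E}[\rho]]$.
   Context: $(\Omega,\mathcal{F},\mathbb{P})$ is a complete nonatomic probability space. $\rho\in L^2$ with $\mathbb{P}(\rho>0)=1$ and $\mathrm{Var}[\rho]>0$. For a random variable $X$, $Q_X(t)=\inf\{y:\mathbb{P}(X\le y)>t\}$ for $t\in[0,1)$ and $Q_X(1):=\lim_{t\uparrow1}Q_X(t)$; $Q_0:=Q_{X_0}$. $\mathscr{Q}$ is the set of increasing, right-continuous $Q:[0,1)\to\mathbb{R}$ with $\int_0^1Q^2<\infty$. For $Q_1,Q_2\in\mathscr{Q}$, $Q_1\succeq_{\mathrm{icx}}Q_2$ means $\int_t^1Q_1\ge\int_t^1Q_2$ for all $t\in[0,1]$. $\mathrm{Var}[Q]=\int_0^1Q^2-(\int_0^1Q)^2$. $\mathscr{Q}_{\mathrm{icx}}(x,Q_0)=\{Q\in\mathscr{Q}:\int_0^1Q(s)Q_\rho(1-s)ds\le x,\ Q\succeq_{\mathrm{icx}}Q_0\}$; a variance-minimal quantile function is a minimizer of $\mathrm{Var}[Q]$ over this set, and $v^\circ(x)$ is the minimal value. *)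

theory Defs
  imports "HOL-Probability.Probability"
begin

definition nonatomic :: "'a measure \<Rightarrow> bool" where
  "nonatomic M \<longleftrightarrow> (\<forall>A\<in>sets M. measure M A > 0 \<longrightarrow>
      (\<exists>B\<in>sets M. B \<subseteq> A \<and> 0 < measure M B \<and> measure M B < measure M A))"

definition quantile :: "'a measure \<Rightarrow> ('a \<Rightarrow> real) \<Rightarrow> real \<Rightarrow> real" where
  "quantile M X t = Inf {y. measure M {\<omega>\<in>space M. X \<omega> \<le> y} > t}"

definition quantile_one :: "'a measure \<Rightarrow> ('a \<Rightarrow> real) \<Rightarrow> real" where
  "quantile_one M X = Lim (at_left (1::real)) (quantile M X)"

(* The set \<Q>: increasing, right-continuous Q on [0,1) with \<integral>_0^1 Q^2 < \<infinity>.
   Quantile functions are represented as real \<Rightarrow> real; only values on [0,1) matter. *)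
definition quantile_space :: "(real \<Rightarrow> real) set" where
  "quantile_space = {Q. mono_on {0..<1} Q
      \<and> (\<forall>t\<in>{0..<1}. continuous (at_right t) Q)
      \<and> set_integrable lborel {0..<1} (\<lambda>s. (Q s)\<^sup>2)}"

definition icx_ge :: "(real \<Rightarrow> real) \<Rightarrow> (real \<Rightarrow> real) \<Rightarrow> bool" where
  "icx_ge Q1 Q2 \<longleftrightarrow> (\<forall>t\<in>{0..1}.
      (LINT s:{t..<1}|lborel. Q1 s) \<ge> (LINT s:{t..<1}|lborel. Q2 s))"

definition qvar :: "(real \<Rightarrow> real) \<Rightarrow> real" where
  "qvar Q = (LINT s:{0..<1}|lborel. (Q s)\<^sup>2) - (LINT s:{0..<1}|lborel. Q s)\<^sup>2"

definition Q_icx :: "'a measure \<Rightarrow> ('a \<Rightarrow> real) \<Rightarrow> real \<Rightarrow> (real \<Rightarrow> real) \<Rightarrow> (real \<Rightarrow> real) set" where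
  "Q_icx M \<rho> x Q0 = {Q \<in> quantile_space.
      (LINT s:{0..<1}|lborel. Q s * quantile M \<rho> (1 - s)) \<le> x \<and> icx_ge Q Q0}"

definition var_minimal :: "'a measure \<Rightarrow> ('a \<Rightarrow> real) \<Rightarrow> real \<Rightarrow> (real \<Rightarrow> real) \<Rightarrow> (real \<Rightarrow> real) \<Rightarrow> bool" where
  "var_minimal M \<rho> x Q0 Q \<longleftrightarrow> Q \<in> Q_icx M \<rho> x Q0 \<and> (\<forall>Q'\<in>Q_icx M \<rho> x Q0. qvar Q \<le> qvar Q')"

definition v_circ :: "'a measure \<Rightarrow> ('a \<Rightarrow> real) \<Rightarrow> real \<Rightarrow> (real \<Rightarrow> real) \<Rightarrow> real" where
  "v_circ M \<rho> x Q0 = Inf (qvar ` Q_icx M \<rho> x Q0)"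

end

theory Submission
  imports Defs
begin

lemma qf_bdd_ne:
  assumes D: "real_distribution D" and t: "0 < t" "t < 1"
  shows "bdd_below {y. t < cdf D y}" "{y. t < cdf D y} \<noteq> {}"
proof -
  interpret real_distribution D by fact
  have "eventually (\<lambda>y. cdf D y < t) at_bot"
    using order_tendstoD(2)[OF cdf_lim_at_bot t(1)] .
  then obtain y0 where y0: "cdf D y0 < t"
    using eventually_happens' trivial_limit_at_bot_linorder by blast
  show "bdd_below {y. t < cdf D y}"
  proof (rule bdd_belowI[of _ y0])
    fix z assume "z \<in> {y. t < cdf D y}"
    then have "cdf D y0 < cdf D z" using y0 by auto
    then show "y0 \<le> z" using cdf_nondecreasing[of z y0] by linarith
  qed
  have "eventually (\<lambda>y. t < cdf D y) at_top"
    using order_tendstoD(1)[OF cdf_lim_at_top_prob t(2)] .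
  then obtain y1 where "t < cdf D y1"
    using eventually_happens' trivial_limit_at_top_linorder by blast
  then show "{y. t < cdf D y} \<noteq> {}" by auto
qed

lemma qf_le1:
  assumes D: "real_distribution D" and t: "0 < t" "t < 1" and "t < cdf D x"
  shows "Inf {y. t < cdf D y} \<le> x"
  using qf_bdd_ne[OF D t] assms(4) by (intro cInf_lower) auto

lemma qf_le2:
  assumes D: "real_distribution D" and t: "0 < t" "t < 1" and le: "Inf {y. t < cdf D y} \<le> x"
  shows "t \<le> cdf D x"
proof (rule ccontr)
  interpret real_distribution D by fact
  assume "\<not> t \<le> cdf D x"
  then have lt: "cdf D x < t" by simp
  have "((cdf D) \<longlongrightarrow> cdf D x) (at_right x)"
    using cdf_is_right_cont[of x] by (simp add: continuous_within)
  then have "eventually (\<lambda>y. cdf D y < t) (at_right x)"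
    using order_tendstoD(2) lt by blast
  then obtain b where b: "b > x" "\<And>y. y > x \<Longrightarrow> y < b \<Longrightarrow> cdf D y < t"
    by (auto simp: eventually_at_right[of x "x+1"])
  define y where "y = (x + b) / 2"
  have "cdf D y < t" using b unfolding y_def by auto
  have "y \<le> Inf {y. t < cdf D y}"
  proof (rule cInf_greatest)
    show "{y. t < cdf D y} \<noteq> {}" using qf_bdd_ne[OF D t] by auto
    fix z assume "z \<in> {y. t < cdf D y}"
    then have "cdf D y < cdf D z" using \<open>cdf D y < t\<close> by auto
    then show "y \<le> z" using cdf_nondecreasing[of z y] by linarith
  qed
  then show False using le b unfolding y_def by auto
qed

lemma qf_mono:
  assumes D: "real_distribution D"
  shows "mono_on {0<..<1} (\<lambda>t. Inf {y. t < cdf D y})"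
proof (rule mono_onI)
  fix r s :: real assume rs: "r \<in> {0<..<1}" "s \<in> {0<..<1}" "r \<le> s"
  show "Inf {y. r < cdf D y} \<le> Inf {y. s < cdf D y}"
    using qf_bdd_ne[OF D, of r] qf_bdd_ne[OF D, of s] rs
    by (intro cInf_superset_mono) auto
qed

lemma qf_distr:
  assumes D: "real_distribution D"
  defines "g \<equiv> \<lambda>s. Inf {y. 1 - s < cdf D y}"
  shows "g \<in> borel_measurable (restrict_space lborel {0<..<1})"
    and "distr (restrict_space lborel {0<..<1}) borel g = D"
proof -
  interpret real_distribution D by fact
  have "mono_on {0<..<1} (\<lambda>s. - g s)"
  proof (rule mono_onI)
    fix r s :: real assume rs: "r \<in> {0<..<1}" "s \<in> {0<..<1}" "r \<le> s"
    then show "- g r \<le> - g s"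
      using mono_onD[OF qf_mono[OF D], of "1-s" "1-r"] unfolding g_def by auto
  qed
  then have "(\<lambda>s. - g s) \<in> borel_measurable (restrict_space borel {0<..<1})"
    by (rule borel_measurable_mono_on_fnc)
  then have "(\<lambda>s. - (- g s)) \<in> borel_measurable (restrict_space borel {0<..<1})"
    by measurable
  then show gm: "g \<in> borel_measurable (restrict_space lborel {0<..<1})"
    by (simp add: measurable_cong_sets[OF sets_restrict_space_cong[OF sets_lborel] refl])
  let ?U = "restrict_space lborel {0<..<1::real}"
  interpret U: prob_space ?U
    by (auto simp add: emeasure_restrict_space space_restrict_space intro!: prob_spaceI)
  show "distr ?U borel g = D"
  proof (intro cdf_unique ext)
    show "real_distribution (distr ?U borel g)"
      using gm by (simp add: U.real_distribution_distr)
    show "real_distribution D" by fact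
    fix x
    let ?C = "cdf D x"
    let ?A = "g -` {..x} \<inter> space ?U"
    let ?B = "{1 - ?C<..<1}"
    have C01: "0 \<le> ?C" "?C \<le> 1" using cdf_nonneg cdf_bounded_prob by auto
    have "cdf (distr ?U borel g) x = measure ?U ?A"
      unfolding cdf_def using gm by (simp add: measure_distr)
    also have "emeasure ?U ?A = emeasure ?U ?B"
    proof (rule emeasure_eq_AE)
      have "AE s in lborel. s \<noteq> 1 - ?C" by (rule AE_lborel_singleton)
      then show "AE s in ?U. s \<in> ?A \<longleftrightarrow> s \<in> ?B"
      proof (subst AE_restrict_space_iff, simp, elim eventually_mono, intro impI)
        fix s assume s: "s \<noteq> 1 - ?C" "s \<in> {0<..<1}"
        show "s \<in> ?A \<longleftrightarrow> s \<in> ?B"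
        proof (cases "1 - s < ?C")
          case True
          then have "g s \<le> x" unfolding g_def using s by (intro qf_le1[OF D]) auto
          then show ?thesis using True s by (auto simp: space_restrict_space)
        next
          case False
          then have "?C < 1 - s" using s by auto
          then have "\<not> g s \<le> x" unfolding g_def using s qf_le2[OF D, of "1-s" x] by auto
          then show ?thesis using False s by (auto simp: space_restrict_space)
        qed
      qed
      show "?A \<in> sets ?U" using gm by measurable
      show "?B \<in> sets ?U" using C01 by (auto simp: sets_restrict_space_iff)
    qed
    then have "measure ?U ?A = measure ?U ?B" by (simp add: measure_def)
    also have "\<dots> = measure lborel ?B" using C01 by (intro measure_restrict_space) auto
    also have "\<dots> = ?C" using C01 by simp
    finally show "cdf (distr ?U borel g) x = cdf D x" .
  qed
qed

lemma indicator_AE_01: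
  "AE s in lborel. indicator {0<..<1::real} s *\<^sub>R f s = indicator {0..<1::real} s *\<^sub>R (f s :: real)"
  using AE_lborel_singleton[of "0::real"] by (elim eventually_mono) (auto simp: indicator_def)

lemma qf_integral:
  assumes D: "real_distribution D" and int: "integrable D (\<lambda>x. x)"
  shows "set_integrable lborel {0..<1} (\<lambda>s. Inf {y. 1 - s < cdf D y})"
    and "(LINT s:{0..<1}|lborel. Inf {y. 1 - s < cdf D y}) = integral\<^sup>L D (\<lambda>x. x)"
proof -
  define g where "g = (\<lambda>s. Inf {y. 1 - s < cdf D y})"
  let ?U = "restrict_space lborel {0<..<1::real}"
  have gm: "g \<in> borel_measurable ?U" and dg: "distr ?U borel g = D"
    using qf_distr[OF D] unfolding g_def by auto
  have "integrable (distr ?U borel g) (\<lambda>x. x)" using int dg by simp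
  then have "integrable ?U g" using gm by (subst (asm) integrable_distr_eq) auto
  then have i1: "integrable lborel (\<lambda>s. indicator {0<..<1} s *\<^sub>R g s)"
    by (subst (asm) integrable_restrict_space) auto
  have m1: "(\<lambda>s. indicator {0<..<1} s *\<^sub>R g s) \<in> borel_measurable borel"
    using gm by (subst (asm) borel_measurable_restrict_space_iff) (auto simp: measurable_cong_sets[OF sets_lborel refl])
  then have "(\<lambda>s. indicator {0<..<1} s *\<^sub>R g s + indicator {0} s * g 0) \<in> borel_measurable borel"
    by measurable
  also have "(\<lambda>s. indicator {0<..<1} s *\<^sub>R g s + indicator {0} s * g 0) = (\<lambda>s. indicator {0..<1} s *\<^sub>R g s)"
    by (auto simp: indicator_def fun_eq_iff)
  finally have m2: "(\<lambda>s. indicator {0..<1} s *\<^sub>R g s) \<in> borel_measurable borel" .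
  then show "set_integrable lborel {0..<1} (\<lambda>s. Inf {y. 1 - s < cdf D y})"
    unfolding set_integrable_def g_def[symmetric]
    by (intro integrable_cong_AE_imp[OF i1 _ indicator_AE_01]) auto
  have "integral\<^sup>L D (\<lambda>x. x) = integral\<^sup>L (distr ?U borel g) (\<lambda>x. x)" using dg by simp
  also have "\<dots> = integral\<^sup>L ?U g" using gm by (subst integral_distr) auto
  also have "\<dots> = integral\<^sup>L lborel (\<lambda>s. indicator {0<..<1} s *\<^sub>R g s)"
    by (subst integral_restrict_space) auto
  also have "\<dots> = (LINT s:{0..<1}|lborel. g s)"
    unfolding set_lebesgue_integral_def by (rule integral_cong_AE[OF _ _ indicator_AE_01]) (use m1 m2 in auto)
  finally show "(LINT s:{0..<1}|lborel. Inf {y. 1 - s < cdf D y}) = integral\<^sup>L D (\<lambda>x. x)"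
    unfolding g_def by simp
qed

lemma quantile_cdf:
  assumes "X \<in> borel_measurable M"
  shows "quantile M X t = Inf {y. t < cdf (distr M borel X) y}"
proof -
  have "cdf (distr M borel X) y = measure M {\<omega>\<in>space M. X \<omega> \<le> y}" for y
    using assms unfolding cdf_def by (subst measure_distr) (auto intro!: arg_cong2[where f=measure])
  then show ?thesis unfolding quantile_def by simp
qed

lemma bounded_quantile:
  assumes P: "prob_space M" and Xm: "X \<in> borel_measurable M" and C: "AE \<omega> in M. \<bar>X \<omega>\<bar> \<le> C"
    and t: "t \<in> {0..<1}"
  shows "bdd_below {y. t < measure M {\<omega>\<in>space M. X \<omega> \<le> y}}"
    and "{y. t < measure M {\<omega>\<in>space M. X \<omega> \<le> y}} \<noteq> {}"
    and "-C \<le> quantile M X t" and "quantile M X t \<le> C"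
proof -
  interpret prob_space M by fact
  have F1: "measure M {\<omega>\<in>space M. X \<omega> \<le> C} = 1"
    using C Xm by (subst prob_Collect_eq_1) (auto elim: eventually_mono)
  have F0: "measure M {\<omega>\<in>space M. X \<omega> \<le> y} = 0" if "y < -C" for y
    using C Xm that by (subst prob_Collect_eq_0) (auto elim!: eventually_mono)
  let ?S = "{y. t < measure M {\<omega>\<in>space M. X \<omega> \<le> y}}"
  have lb: "-C \<le> y" if "y \<in> ?S" for y
  proof (rule ccontr)
    assume "\<not> -C \<le> y" then have "measure M {\<omega>\<in>space M. X \<omega> \<le> y} = 0" using F0 by auto
    then show False using that t by auto
  qed
  have inS: "C \<in> ?S" using F1 t by auto
  show "bdd_below ?S" using lb by (intro bdd_belowI[of _ "-C"]) auto
  show "?S \<noteq> {}" using inS by auto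
  show "-C \<le> quantile M X t" unfolding quantile_def using inS lb by (intro cInf_greatest) auto
  show "quantile M X t \<le> C" unfolding quantile_def using inS lb
    by (intro cInf_lower) (auto intro: bdd_belowI[of _ "-C"])
qed

lemma bounded_quantile_mono:
  assumes P: "prob_space M" and Xm: "X \<in> borel_measurable M" and C: "AE \<omega> in M. \<bar>X \<omega>\<bar> \<le> C"
  shows "mono_on {0..<1} (quantile M X)"
proof (rule mono_onI)
  fix r s :: real assume rs: "r \<in> {0..<1}" "s \<in> {0..<1}" "r \<le> s"
  show "quantile M X r \<le> quantile M X s"
    unfolding quantile_def
    using bounded_quantile[OF P Xm C rs(1)] bounded_quantile[OF P Xm C rs(2)] rs
    by (intro cInf_superset_mono) auto
qed

lemma bounded_quantile_lim:
  assumes P: "prob_space M" and Xm: "X \<in> borel_measurable M" and C: "AE \<omega> in M. \<bar>X \<omega>\<bar> \<le> C"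
  shows "quantile_one M X = (SUP t\<in>{0..<1}. quantile M X t)"
    and "\<And>t. t \<in> {0..<1} \<Longrightarrow> quantile M X t \<le> quantile_one M X"
proof -
  let ?Q = "quantile M X"
  let ?L = "SUP t\<in>{0..<1}. ?Q t"
  have bdd: "bdd_above (?Q ` {0..<1})"
    using bounded_quantile(4)[OF P Xm C] by (intro bdd_aboveI[of _ C]) auto
  have up: "?Q t \<le> ?L" if "t \<in> {0..<1}" for t using bdd that by (intro cSUP_upper)
  have lim: "(?Q \<longlongrightarrow> ?L) (at_left 1)"
  proof (rule increasing_tendsto)
    show "eventually (\<lambda>t. ?Q t \<le> ?L) (at_left 1)"
      using eventually_at_left_real[where a="1::real" and b=0, OF zero_less_one] by (elim eventually_mono) (auto intro: up)
    fix x assume "x < ?L"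
    then obtain t0 where t0: "t0 \<in> {0..<1}" "x < ?Q t0"
      using less_cSUP_iff[OF _ bdd] by auto
    have ev: "eventually (\<lambda>t. t \<in> {t0<..<1}) (at_left (1::real))"
      using eventually_at_left_real[where a="1::real" and b=t0] t0(1) by auto
    show "eventually (\<lambda>t. x < ?Q t) (at_left 1)"
      using ev
    proof (rule eventually_mono)
      fix t assume "t \<in> {t0<..<1}"
      then show "x < ?Q t" using t0 mono_onD[OF bounded_quantile_mono[OF P Xm C], of t0 t] by auto
    qed
  qed
  then show eq: "quantile_one M X = ?L"
    unfolding quantile_one_def by (intro tendsto_Lim) auto
  show "?Q t \<le> quantile_one M X" if "t \<in> {0..<1}" for t using up[OF that] eq by simp
qed

lemma U0_prob: "prob_space (restrict_space lborel {0..<1::real})"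
  by (auto simp add: emeasure_restrict_space space_restrict_space intro!: prob_spaceI)

lemma set_int_U0: "(LINT s:{0..<1}|lborel. f s) = integral\<^sup>L (restrict_space lborel {0..<1::real}) (f::real\<Rightarrow>real)"
  unfolding set_lebesgue_integral_def by (subst integral_restrict_space) auto

lemma set_intble_U0: "set_integrable lborel {0..<1} f \<longleftrightarrow> integrable (restrict_space lborel {0..<1::real}) (f::real\<Rightarrow>real)"
  unfolding set_integrable_def by (subst integrable_restrict_space) auto

lemma qs_props:
  assumes "Q \<in> quantile_space"
  defines "m \<equiv> (LINT s:{0..<1}|lborel. Q s)"
  shows "set_integrable lborel {0..<1} Q"
    and "qvar Q = (LINT s:{0..<1}|lborel. (Q s - m)\<^sup>2)"
    and "0 \<le> qvar Q"
    and "qvar Q = 0 \<Longrightarrow> \<forall>t\<in>{0..<1}. Q t = m"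
proof -
  let ?U = "restrict_space lborel {0..<1::real}"
  interpret U: prob_space ?U by (rule U0_prob)
  have mono: "mono_on {0..<1} Q" and rc: "\<forall>t\<in>{0..<1}. continuous (at_right t) Q"
    and sq: "set_integrable lborel {0..<1} (\<lambda>s. (Q s)\<^sup>2)"
    using assms unfolding quantile_space_def by auto
  have Qm: "Q \<in> borel_measurable ?U"
    using borel_measurable_mono_on_fnc[OF mono]
    by (simp add: measurable_cong_sets[OF sets_restrict_space_cong[OF sets_lborel] refl])
  have sqi: "integrable ?U (\<lambda>s. (Q s)\<^sup>2)" using sq by (simp add: set_intble_U0)
  have Qi: "integrable ?U Q" using U.square_integrable_imp_integrable[OF Qm sqi] .
  then show "set_integrable lborel {0..<1} Q" by (simp add: set_intble_U0)
  have m: "m = U.expectation Q" unfolding m_def by (simp add: set_int_U0)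
  have "qvar Q = U.expectation (\<lambda>s. (Q s)\<^sup>2) - (U.expectation Q)\<^sup>2"
    unfolding qvar_def by (simp add: set_int_U0)
  also have "\<dots> = U.variance Q" using U.variance_eq[OF Qi sqi] by simp
  finally have qv: "qvar Q = U.variance Q" .
  then show "qvar Q = (LINT s:{0..<1}|lborel. (Q s - m)\<^sup>2)" by (simp add: set_int_U0 m)
  show "0 \<le> qvar Q" using qv U.variance_positive by simp
  assume q0: "qvar Q = 0"
  have di: "integrable ?U (\<lambda>s. (Q s - m)\<^sup>2)"
  proof -
    have "integrable ?U (\<lambda>s. (Q s)\<^sup>2 - 2 * m * Q s + m\<^sup>2)"
      using sqi Qi by (intro Bochner_Integration.integrable_diff Bochner_Integration.integrable_add integrable_mult_right) auto
    also have "(\<lambda>s. (Q s)\<^sup>2 - 2 * m * Q s + m\<^sup>2) = (\<lambda>s. (Q s - m)\<^sup>2)"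
      by (auto simp: fun_eq_iff power2_diff algebra_simps)
    finally show ?thesis .
  qed
  have "U.variance Q = 0" using q0 qv by simp
  then have "integral\<^sup>L ?U (\<lambda>s. (Q s - m)\<^sup>2) = 0" using m by simp
  then have "AE s in ?U. (Q s - m)\<^sup>2 = 0"
    using integral_nonneg_eq_0_iff_AE[OF di] by auto
  then have AEl: "AE s in lborel. s \<in> {0..<1} \<longrightarrow> Q s = m"
    by (subst (asm) AE_restrict_space_iff) auto
  show "\<forall>t\<in>{0..<1}. Q t = m"
  proof
    fix t :: real assume t: "t \<in> {0..<1}"
    show "Q t = m"
    proof (rule ccontr)
      assume ne: "Q t \<noteq> m"
      define e where "e = \<bar>Q t - m\<bar>"
      have e: "e > 0" using ne unfolding e_def by auto
      have "(Q \<longlongrightarrow> Q t) (at_right t)" using rc t by (simp add: continuous_within)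
      then have "eventually (\<lambda>s. dist (Q s) (Q t) < e) (at_right t)"
        using e by (rule tendstoD)
      then obtain b where b: "b > t" "\<And>s. s > t \<Longrightarrow> s < b \<Longrightarrow> dist (Q s) (Q t) < e"
        by (auto simp: eventually_at_right[of t "t+1"])
      define b' where "b' = min b 1"
      have tb: "t < b'" using b t unfolding b'_def by auto
      have "\<exists>s\<in>{t<..<b'}. Q s = m"
      proof (rule ccontr)
        assume "\<not> (\<exists>s\<in>{t<..<b'}. Q s = m)"
        then have "AE s in lborel. s \<notin> {t<..<b'}"
          using AEl t unfolding b'_def by (elim eventually_mono) auto
        then have "emeasure lborel {t<..<b'} = 0"
          by (subst (asm) AE_iff_measurable[of "{t<..<b'}"]) auto
        then show False using tb by simp
      qed
      then obtain s where s: "s \<in> {t<..<b'}" "Q s = m" by auto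
      then have "dist (Q s) (Q t) < e" using b unfolding b'_def by auto
      then show False using s unfolding e_def by (simp add: dist_real_def abs_minus_commute)
    qed
  qed
qed

lemma const_set_integrable: "t \<in> {0..1} \<Longrightarrow> set_integrable lborel {t..<1::real} (\<lambda>_. c::real)"
proof -
  assume t: "t \<in> {0..1}"
  interpret U: prob_space "restrict_space lborel {0..<1::real}" by (rule U0_prob)
  have "set_integrable lborel {0..<1::real} (\<lambda>_. c::real)"
    by (simp add: set_intble_U0)
  then show ?thesis by (rule set_integrable_subset) (use t in auto)
qed

lemma const_set_integral: "t \<in> {0..1} \<Longrightarrow> (\<forall>s\<in>{0..<1}. Q s = c) \<Longrightarrow> (LINT s:{t..<1::real}|lborel. Q s) = (1 - t) * c"
proof -
  assume t: "t \<in> {0..1}" and Q: "\<forall>s\<in>{0..<1}. Q s = c"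
  have "(LINT s:{t..<1::real}|lborel. Q s) = (LINT s:{t..<1::real}|lborel. c)"
    using t Q by (intro set_lebesgue_integral_cong) auto
  also have "\<dots> = (1 - t) * c" using t by (subst set_integral_const) auto
  finally show ?thesis .
qed

theorem proposition4p1:
  fixes M :: "'a measure" and \<rho> X0 :: "'a \<Rightarrow> real" and x :: real
  assumes "prob_space M"
    and "complete_measure M"
    and "nonatomic M"
    and "\<rho> \<in> borel_measurable M"
    and "integrable M (\<lambda>\<omega>. (\<rho> \<omega>)\<^sup>2)"
    and "AE \<omega> in M. \<rho> \<omega> > 0"
    and "prob_space.variance M \<rho> > 0"
    and "X0 \<in> borel_measurable M"
    and "\<exists>C. AE \<omega> in M. \<bar>X0 \<omega>\<bar> \<le> C"
    and "quantile_one M X0 * prob_space.expectation M \<rho> \<le> x"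
  shows "v_circ M \<rho> x (quantile M X0) = 0
    \<and> (\<forall>Q. var_minimal M \<rho> x (quantile M X0) Q \<longleftrightarrow>
          Q \<in> quantile_space \<and>
          (\<exists>c. quantile_one M X0 \<le> c \<and> c \<le> x / prob_space.expectation M \<rho>
               \<and> (\<forall>t\<in>{0..<1}. Q t = c)))"
proof -
  interpret prob_space M by fact
  note P = \<open>prob_space M\<close>
  note Xm = \<open>X0 \<in> borel_measurable M\<close>
  note \<rho>m = \<open>\<rho> \<in> borel_measurable M\<close>
  obtain C where C: "AE \<omega> in M. \<bar>X0 \<omega>\<bar> \<le> C" using assms(9) by auto
  define Q0 where "Q0 = quantile M X0"
  define L where "L = quantile_one M X0"
  define E where "E = expectation \<rho>"
  define R where "R = (\<lambda>s. quantile M \<rho> (1 - s))"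
  let ?U = "restrict_space lborel {0..<1::real}"
  interpret U: prob_space ?U by (rule U0_prob)
  have Q0L: "Q0 t \<le> L" if "t \<in> {0..<1}" for t
    using bounded_quantile_lim(2)[OF P Xm C that] unfolding Q0_def L_def .
  have Lsup: "L = (SUP t\<in>{0..<1}. Q0 t)"
    using bounded_quantile_lim(1)[OF P Xm C] unfolding Q0_def L_def .
  have Q0mono: "mono_on {0..<1} Q0" using bounded_quantile_mono[OF P Xm C] unfolding Q0_def .
  have Q0b: "\<bar>Q0 t\<bar> \<le> C" if "t \<in> {0..<1}" for t
    using bounded_quantile(3,4)[OF P Xm C that] unfolding Q0_def by auto
  have Q0m: "Q0 \<in> borel_measurable ?U"
    using borel_measurable_mono_on_fnc[OF Q0mono]
    by (simp add: measurable_cong_sets[OF sets_restrict_space_cong[OF sets_lborel] refl])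
  have "integrable ?U Q0"
    by (rule U.integrable_const_bound[OF _ Q0m, of C])
       (use Q0b in \<open>auto simp: AE_restrict_space_iff\<close>)
  then have Q0i0: "set_integrable lborel {0..<1} Q0" by (simp add: set_intble_U0)
  have Q0i: "set_integrable lborel {t..<1} Q0" if "t \<in> {0..1}" for t
    by (rule set_integrable_subset[OF Q0i0]) (use that in auto)
  have \<rho>i: "integrable M \<rho>" using square_integrable_imp_integrable[OF \<rho>m assms(5)] .
  define D where "D = distr M borel \<rho>"
  have D: "real_distribution D" unfolding D_def using \<rho>m by (simp add: real_distribution_distr)
  have Di: "integrable D (\<lambda>x. x)" unfolding D_def using \<rho>i \<rho>m by (subst integrable_distr_eq) auto
  have DE: "integral\<^sup>L D (\<lambda>x. x) = E" unfolding D_def E_def using \<rho>m by (subst integral_distr) auto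
  have Rq: "R = (\<lambda>s. Inf {y. 1 - s < cdf D y})"
    unfolding R_def D_def using quantile_cdf[OF \<rho>m] by auto
  have Ri: "set_integrable lborel {0..<1} R" and RE: "(LINT s:{0..<1}|lborel. R s) = E"
    using qf_integral[OF D Di] DE unfolding Rq by auto
  have Epos: "E > 0"
  proof -
    have "0 \<le> E" unfolding E_def using assms(6) by (intro integral_nonneg_AE) (auto elim: eventually_mono)
    moreover have "E \<noteq> 0"
    proof
      assume "E = 0"
      moreover have "AE \<omega> in M. 0 \<le> \<rho> \<omega>" using assms(6) by (auto elim: eventually_mono)
      ultimately have "AE \<omega> in M. \<rho> \<omega> = 0"
        using integral_nonneg_eq_0_iff_AE[OF \<rho>i] unfolding E_def by simp
      with assms(6) have "AE \<omega> in M. False" by eventually_elim auto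
      then show False by simp
    qed
    ultimately show ?thesis by simp
  qed
  have Ka: "(LINT s:{0..<1}|lborel. Q s * R s) = c * E" if Q: "\<forall>t\<in>{0..<1}. Q t = c" for Q c
  proof -
    have "(LINT s:{0..<1}|lborel. Q s * R s) = (LINT s:{0..<1}|lborel. c * R s)"
      using Q by (intro set_lebesgue_integral_cong) auto
    then show ?thesis using RE by simp
  qed
  have Kb: "icx_ge Q Q0 \<longleftrightarrow> L \<le> c" if Q: "\<forall>t\<in>{0..<1}. Q t = c" for Q c
  proof
    assume icx: "icx_ge Q Q0"
    have "Q0 t \<le> c" if t: "t \<in> {0..<1}" for t
    proof -
      have "(1 - t) * Q0 t = (LINT s:{t..<1}|lborel. Q0 t)"
        using t by (subst set_integral_const) auto
      also have "\<dots> \<le> (LINT s:{t..<1}|lborel. Q0 s)"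
        using t Q0i[of t] const_set_integrable[of t]
        by (intro set_integral_mono) (auto intro: mono_onD[OF Q0mono])
      also have "\<dots> \<le> (LINT s:{t..<1}|lborel. Q s)" using icx t unfolding icx_ge_def by auto
      also have "\<dots> = (1 - t) * c" using const_set_integral[of t Q c] t Q by auto
      finally show ?thesis using t by auto
    qed
    then show "L \<le> c" unfolding Lsup by (intro cSUP_least) auto
  next
    assume Lc: "L \<le> c"
    show "icx_ge Q Q0" unfolding icx_ge_def
    proof
      fix t :: real assume t: "t \<in> {0..1}"
      have "(LINT s:{t..<1}|lborel. Q0 s) \<le> (LINT s:{t..<1}|lborel. c)"
      proof (rule set_integral_mono)
        show "set_integrable lborel {t..<1} Q0" using Q0i t .
        show "set_integrable lborel {t..<1} (\<lambda>_. c)" using const_set_integrable t .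
        fix s assume "s \<in> {t..<1}"
        then have "Q0 s \<le> L" using Q0L t by auto
        then show "Q0 s \<le> c" using Lc by simp
      qed
      also have "\<dots> = (LINT s:{t..<1}|lborel. Q s)"
        using t Q by (intro set_lebesgue_integral_cong) auto
      finally show "(LINT s:{t..<1}|lborel. Q0 s) \<le> (LINT s:{t..<1}|lborel. Q s)" .
    qed
  qed
  have Kc: "qvar Q = 0" if Q: "\<forall>t\<in>{0..<1}. Q t = c" for Q c
  proof -
    have "(LINT s:{0..<1}|lborel. (Q s)\<^sup>2) = (LINT s:{0..<1::real}|lborel. (c\<^sup>2))"
      using Q by (intro set_lebesgue_integral_cong) auto
    moreover have "(LINT s:{0..<1}|lborel. Q s) = (LINT s:{0..<1::real}|lborel. c)"
      using Q by (intro set_lebesgue_integral_cong) auto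
    ultimately show ?thesis unfolding qvar_def by (simp add: set_integral_const)
  qed
  have Lspace: "(\<lambda>_. L) \<in> quantile_space"
    unfolding quantile_space_def by (auto simp: set_intble_U0 mono_on_def)
  have LQ: "(\<lambda>_. L) \<in> Q_icx M \<rho> x Q0"
    unfolding Q_icx_def using Lspace Ka[of "\<lambda>_. L" L] Kb[of "\<lambda>_. L" L] assms(10)
    unfolding R_def L_def E_def by auto
  have qL: "qvar (\<lambda>_. L) = 0" using Kc[of "\<lambda>_. L" L] by simp
  have qpos: "0 \<le> qvar Q" if "Q \<in> Q_icx M \<rho> x Q0" for Q
    using that qs_props(3) unfolding Q_icx_def by auto
  have v0: "v_circ M \<rho> x Q0 = 0"
    unfolding v_circ_def
  proof (rule cInf_eq_minimum)
    show "0 \<in> qvar ` Q_icx M \<rho> x Q0" using LQ qL by (metis image_eqI)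
    fix y assume "y \<in> qvar ` Q_icx M \<rho> x Q0"
    then show "0 \<le> y" using qpos by auto
  qed
  have vm: "var_minimal M \<rho> x Q0 Q \<longleftrightarrow>
          Q \<in> quantile_space \<and> (\<exists>c. L \<le> c \<and> c \<le> x / E \<and> (\<forall>t\<in>{0..<1}. Q t = c))" for Q
  proof
    assume vmQ: "var_minimal M \<rho> x Q0 Q"
    then have Qi: "Q \<in> Q_icx M \<rho> x Q0" and "qvar Q \<le> qvar (\<lambda>_. L)"
      unfolding var_minimal_def using LQ by auto
    then have le: "qvar Q \<le> 0" using qL by simp
    from Qi have Qs: "Q \<in> quantile_space" and int: "(LINT s:{0..<1}|lborel. Q s * R s) \<le> x"
      and icx: "icx_ge Q Q0"
      unfolding Q_icx_def R_def by auto
    have "qvar Q = 0" using le qs_props(3)[OF Qs] by simp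
    then obtain m where m: "\<forall>t\<in>{0..<1}. Q t = m" using qs_props(4)[OF Qs] by blast
    have "L \<le> m" using Kb[OF m] icx by simp
    moreover have "m \<le> x / E" using Ka[OF m] int Epos by (simp add: pos_le_divide_eq)
    ultimately show "Q \<in> quantile_space \<and> (\<exists>c. L \<le> c \<and> c \<le> x / E \<and> (\<forall>t\<in>{0..<1}. Q t = c))"
      using Qs m by blast
  next
    assume "Q \<in> quantile_space \<and> (\<exists>c. L \<le> c \<and> c \<le> x / E \<and> (\<forall>t\<in>{0..<1}. Q t = c))"
    then obtain c where Qs: "Q \<in> quantile_space" and c: "L \<le> c" "c \<le> x / E" and Q: "\<forall>t\<in>{0..<1}. Q t = c"
      by blast
    have "c * E \<le> x" using c(2) Epos by (simp add: pos_le_divide_eq)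
    then have "Q \<in> Q_icx M \<rho> x Q0"
      unfolding Q_icx_def using Qs Ka[OF Q] Kb[OF Q] c(1) unfolding R_def by auto
    then show "var_minimal M \<rho> x Q0 Q"
      unfolding var_minimal_def using Kc[OF Q] qpos by auto
  qed
  show ?thesis using v0 vm unfolding Q0_def L_def E_def by blast
qed

end
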